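(* Let $U$ be a Banach space with norm $\|\cdot\|$, $V$ a Hilbert space, $\psi:U\times V\to V$, and $(\bar u,\bar v)$ in the interior of the domain of $\psi$ with $\psi(\bar u,\bar v)=0$. Assume (a) there are neighborhoods ${\cal B}_U$ of $\bar u$ and ${\cal B}_V$ of $\bar v$ such that $\psi$ is continuous on ${\cal B}_U\times{\cal B}_V$; (b) $\psi(u,\cdot)$ is strongly monotone on ${\cal B}_V$ uniformly in $u\in{\cal B}_U$, i.e. there is $\tau>0$ with $\langle\psi(u,v_1)-\psi(u,v_2),v_1-v_2\rangle\ge\tau\|v_1-v_2\|^2$ for all $v_1,v_2\in{\cal B}_V$, $u\in{\cal B}_U$; (c) $\psi(\cdot,v)$ is Lipschitz continuous on $U$ uniformly in $v\in{\cal B}_V$. Then, with $S(u):=\{v\in V:\psi(u,v)=0\}$ for $u\in U$: (i) $S$ has a single-valued localization around $\bar u$ for $\bar v$; (ii) this localization is Lipschitz continuous around $\bar u$.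
   Context: A set-valued map $S:U\rightrightarrows V$ has a single-valued localization around $\bar u$ for $\bar v\in S(\bar u)$ if there are neighborhoods $W$ of $\bar u$ and $O$ of $\bar v$ such that $u\mapsto S(u)\cap O$ is single-valued on $W$ (in particular $W\subset\operatorname{dom}S$); it is Lipschitz continuous around $\bar u$ if this single-valued map is Lipschitz on $W$. *)

theory Defs
  imports "HOL-Analysis.Analysis"
begin

definition sv_localization_on :: "('a::topological_space \<Rightarrow> 'b::topological_space set)
    \<Rightarrow> 'a \<Rightarrow> 'b \<Rightarrow> 'a set \<Rightarrow> 'b set \<Rightarrow> bool" where
  "sv_localization_on S ub vb W Ov \<longleftrightarrow>
     vb \<in> S ub \<and> ub \<in> interior W \<and> vb \<in> interior Ov \<and> (\<forall>u\<in>W. \<exists>!v. v \<in> S u \<inter> Ov)"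

definition has_sv_localization :: "('a::topological_space \<Rightarrow> 'b::topological_space set)
    \<Rightarrow> 'a \<Rightarrow> 'b \<Rightarrow> bool" where
  "has_sv_localization S ub vb \<longleftrightarrow> (\<exists>W Ov. sv_localization_on S ub vb W Ov)"

definition has_lipschitz_sv_localization :: "('a::metric_space \<Rightarrow> 'b::metric_space set)
    \<Rightarrow> 'a \<Rightarrow> 'b \<Rightarrow> bool" where
  "has_lipschitz_sv_localization S ub vb \<longleftrightarrow>
     (\<exists>W Ov L. sv_localization_on S ub vb W Ov \<and>
        (lipschitz_on L W (\<lambda>u. THE v. v \<in> S u \<inter> Ov)))"

end

theory Submission
  imports Defs
begin


lemma dsum_inner:
  fixes f g :: "'i \<Rightarrow> 'v::real_inner"
  shows "(\<Sum>y\<in>Y. \<Sum>z\<in>Y. u y * u z * inner (f y) (f z)) = inner (\<Sum>y\<in>Y. u y *\<^sub>R f y) (\<Sum>z\<in>Y. u z *\<^sub>R f z)"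
  apply (simp add: inner_sum_left inner_sum_right sum_distrib_left mult.assoc)
  apply (subst sum.swap)
  apply (simp add: inner_commute mult.left_commute)
  done

lemma kirsz_alg:
  fixes b :: "'v::real_inner \<Rightarrow> 'v"
  assumes fin: "finite Y" and u0: "\<forall>y\<in>Y. 0 \<le> u y" and u1: "sum u Y = 1"
    and pw: "\<forall>y\<in>Y. \<forall>z\<in>Y. norm (y - z) \<le> norm (b y - b z)"
  shows "(\<Sum>y\<in>Y. u y * ((norm ((\<Sum>z\<in>Y. u z *\<^sub>R z) - y))\<^sup>2 - (norm (b y))\<^sup>2)) \<le> 0"
proof -
  define v where "v = (\<Sum>z\<in>Y. u z *\<^sub>R z)"
  define \<beta> where "\<beta> = (\<Sum>z\<in>Y. u z *\<^sub>R b z)"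
  have sq: "\<And>x w::'v. (norm (x - w))\<^sup>2 = inner x x - 2 * inner x w + inner w w"
    by (simp add: power2_norm_eq_inner inner_diff_left inner_diff_right inner_commute)
  have key: "0 \<le> (\<Sum>y\<in>Y. \<Sum>z\<in>Y. u y * u z * ((norm (b y - b z))\<^sup>2 - (norm (y - z))\<^sup>2))"
  proof (intro sum_nonneg)
    fix y z assume "y \<in> Y" "z \<in> Y"
    then show "0 \<le> u y * u z * ((norm (b y - b z))\<^sup>2 - (norm (y - z))\<^sup>2)"
      using u0 pw by (simp add: power_mono)
  qed
  have exp1: "\<And>f::'v\<Rightarrow>'v. (\<Sum>y\<in>Y. \<Sum>z\<in>Y. u y * u z * (norm (f y - f z))\<^sup>2)
      = 2 * (\<Sum>y\<in>Y. u y * inner (f y) (f y)) - 2 * inner (\<Sum>y\<in>Y. u y *\<^sub>R f y) (\<Sum>z\<in>Y. u z *\<^sub>R f z)"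
  proof -
    fix f :: "'v\<Rightarrow>'v"
    have "(\<Sum>y\<in>Y. \<Sum>z\<in>Y. u y * u z * (norm (f y - f z))\<^sup>2)
        = (\<Sum>y\<in>Y. \<Sum>z\<in>Y. u y * u z * inner (f y) (f y)) + (\<Sum>y\<in>Y. \<Sum>z\<in>Y. u z * u y * inner (f z) (f z))
          - 2 * (\<Sum>y\<in>Y. \<Sum>z\<in>Y. u y * u z * inner (f y) (f z))"
      by (simp add: sq algebra_simps sum.distrib sum_subtractf sum_distrib_left)
    also have "(\<Sum>y\<in>Y. \<Sum>z\<in>Y. u z * u y * inner (f z) (f z)) = (\<Sum>y\<in>Y. \<Sum>z\<in>Y. u y * u z * inner (f y) (f y))"
      by (rule sum.swap)
    also have "(\<Sum>y\<in>Y. \<Sum>z\<in>Y. u y * u z * inner (f y) (f y)) = (\<Sum>y\<in>Y. u y * inner (f y) (f y))"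
      by (simp add: sum_distrib_right[symmetric] sum_distrib_left[symmetric] u1 mult.commute mult.left_commute)
    finally show "?thesis f" by (simp add: dsum_inner)
  qed
  have lhs: "(\<Sum>y\<in>Y. u y * ((norm (v - y))\<^sup>2 - (norm (b y))\<^sup>2))
      = (\<Sum>y\<in>Y. u y * inner y y) - inner v v - (\<Sum>y\<in>Y. u y * inner (b y) (b y))"
  proof -
    have "(\<Sum>y\<in>Y. u y * ((norm (v - y))\<^sup>2 - (norm (b y))\<^sup>2))
       = (\<Sum>y\<in>Y. u y) * inner v v - 2 * inner v (\<Sum>y\<in>Y. u y *\<^sub>R y) + (\<Sum>y\<in>Y. u y * inner y y) - (\<Sum>y\<in>Y. u y * inner (b y) (b y))"
      by (simp add: sq algebra_simps sum.distrib sum_subtractf sum_distrib_left sum_distrib_right inner_sum_right power2_norm_eq_inner inner_commute)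
    then show ?thesis by (simp add: u1 v_def[symmetric])
  qed
  have "(\<Sum>y\<in>Y. \<Sum>z\<in>Y. u y * u z * ((norm (b y - b z))\<^sup>2 - (norm (y - z))\<^sup>2))
      = (\<Sum>y\<in>Y. \<Sum>z\<in>Y. u y * u z * (norm (b y - b z))\<^sup>2) - (\<Sum>y\<in>Y. \<Sum>z\<in>Y. u y * u z * (norm (y - z))\<^sup>2)"
    by (simp add: right_diff_distrib sum_subtractf)
  also have "\<dots> = 2 * (\<Sum>y\<in>Y. u y * inner (b y) (b y)) - 2 * inner \<beta> \<beta>
       - (2 * (\<Sum>y\<in>Y. u y * inner y y) - 2 * inner v v)"
    using exp1[of b] exp1[of "\<lambda>x. x"] by (simp add: v_def \<beta>_def)
  finally have "0 \<le> 2 * (\<Sum>y\<in>Y. u y * inner (b y) (b y)) - 2 * inner \<beta> \<beta>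
       - (2 * (\<Sum>y\<in>Y. u y * inner y y) - 2 * inner v v)" using key by simp
  moreover have "0 \<le> inner \<beta> \<beta>" by simp
  ultimately show ?thesis unfolding v_def[symmetric] lhs by linarith
qed



lemma cont_Max:
  fixes f :: "'i \<Rightarrow> 'a::topological_space \<Rightarrow> real"
  assumes "finite J" "J \<noteq> {}" "\<forall>i\<in>J. continuous_on S (f i)"
  shows "continuous_on S (\<lambda>x. Max ((\<lambda>i. f i x) ` J))"
  using assms
proof (induction J rule: finite_ne_induct)
  case (singleton i) then show ?case by simp
next
  case (insert i F)
  have "(\<lambda>x. Max ((\<lambda>i. f i x) ` insert i F)) = (\<lambda>x. max (f i x) (Max ((\<lambda>i. f i x) ` F)))"
    using insert by (auto simp: Max_insert)
  then show ?case using insert by (auto intro!: continuous_on_max)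
qed

lemma norm_diff_sq:
  fixes x y :: "'v::real_inner"
  shows "(norm (x - y))\<^sup>2 = (norm x)\<^sup>2 - 2 * inner x y + (norm y)\<^sup>2"
  by (simp add: power2_norm_eq_inner inner_diff_left inner_diff_right inner_commute)

lemma norm_add_sq:
  fixes x y :: "'v::real_inner"
  shows "(norm (x + y))\<^sup>2 = (norm x)\<^sup>2 + 2 * inner x y + (norm y)\<^sup>2"
  by (simp add: power2_norm_eq_inner inner_add_left inner_add_right inner_commute)

lemma proj_char:
  fixes v p :: "'v::real_inner"
  assumes cK: "convex K" and pK: "p \<in> K" and pmin: "\<forall>q\<in>K. norm (v - p) \<le> norm (v - q)" and qK: "q \<in> K"
  shows "inner (v - p) (q - p) \<le> 0"
proof (rule ccontr)
  assume "\<not> ?thesis"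
  then have al: "inner (v - p) (q - p) > 0" by simp
  define \<alpha> where "\<alpha> = inner (v - p) (q - p)"
  have qp: "q \<noteq> p" using al by auto
  then have n0: "(norm (q - p))\<^sup>2 > 0" by simp
  define s where "s = min 1 (\<alpha> / (norm (q - p))\<^sup>2)"
  have s0: "0 < s" using al n0 by (simp add: s_def \<alpha>_def)
  have s1: "s \<le> 1" by (simp add: s_def)
  have sle: "s * (norm (q - p))\<^sup>2 \<le> \<alpha>"
    using n0 by (simp add: s_def min_def field_simps)
  have "p + s *\<^sub>R (q - p) \<in> K"
  proof -
    have "(1 - s) *\<^sub>R p + s *\<^sub>R q \<in> K" using cK pK qK s0 s1 by (simp add: convexD)
    moreover have "(1 - s) *\<^sub>R p + s *\<^sub>R q = p + s *\<^sub>R (q - p)" by (simp add: algebra_simps)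
    ultimately show ?thesis by simp
  qed
  then have "norm (v - p) \<le> norm (v - (p + s *\<^sub>R (q - p)))" using pmin by blast
  then have "(norm (v - p))\<^sup>2 \<le> (norm ((v - p) - s *\<^sub>R (q - p)))\<^sup>2"
    by (simp add: power_mono algebra_simps)
  also have "\<dots> = (norm (v - p))\<^sup>2 - 2 * s * \<alpha> + s * (s * (norm (q - p))\<^sup>2)"
    unfolding norm_diff_sq[of "v - p"] by (simp add: \<alpha>_def power2_eq_square)
  finally have "2 * s * \<alpha> \<le> s * (s * (norm (q - p))\<^sup>2)" by simp
  then have "2 * \<alpha> \<le> s * (norm (q - p))\<^sup>2" using s0 by (simp add: mult.assoc)
  with sle al show False unfolding \<alpha>_def by linarith
qed

lemma kirsz_finite:
  fixes c a :: "'i \<Rightarrow> 'v::real_inner"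
  assumes fin: "finite J" and ne: "J \<noteq> {}"
    and pw: "\<forall>i\<in>J. \<forall>j\<in>J. norm (c i - c j) \<le> norm (a i - a j)"
  shows "\<exists>v. \<forall>i\<in>J. norm (v - c i) \<le> norm (a i)"
proof -
  define h where "h i x = (norm (x - c i))\<^sup>2 - (norm (a i))\<^sup>2" for i x
  define g where "g x = Max ((\<lambda>i. h i x) ` J)" for x
  define K where "K = convex hull (c ` J)"
  have Kc: "compact K" unfolding K_def using fin by (simp add: finite_imp_compact_convex_hull)
  have Kne: "K \<noteq> {}" unfolding K_def using ne by simp
  have Kcv: "convex K" unfolding K_def by simp
  have hcont: "\<And>i S. continuous_on S (h i)" unfolding h_def by (intro continuous_intros)
  have gcont: "continuous_on K g" unfolding g_def using fin ne hcont by (intro cont_Max) auto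
  obtain v where vK: "v \<in> K" and vmin: "\<forall>y\<in>K. g v \<le> g y"
    using continuous_attains_inf[OF Kc Kne gcont] by blast
  define m where "m = g v"
  have hle: "\<And>i. i \<in> J \<Longrightarrow> h i v \<le> m" unfolding m_def g_def using fin by simp
  have "m \<le> 0"
  proof (rule ccontr)
    assume "\<not> m \<le> 0"
    then have mpos: "m > 0" by simp
    define A where "A = {i\<in>J. h i v = m}"
    have Afin: "finite A" using fin by (simp add: A_def)
    have "m \<in> (\<lambda>i. h i v) ` J" unfolding m_def g_def using fin ne by simp
    then have Ane: "A \<noteq> {}" unfolding A_def by auto
    have AJ: "A \<subseteq> J" by (auto simp: A_def)
    have vA: "v \<in> convex hull (c ` A)"
    proof (rule ccontr)
      assume vnot: "v \<notin> convex hull (c ` A)"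
      define KA where "KA = convex hull (c ` A)"
      have KAc: "compact KA" unfolding KA_def using Afin by (simp add: finite_imp_compact_convex_hull)
      have KAne: "KA \<noteq> {}" unfolding KA_def using Ane by simp
      have "continuous_on KA (\<lambda>q. norm (v - q))" by (intro continuous_intros)
      then obtain p where pKA: "p \<in> KA" and pmin: "\<forall>q\<in>KA. norm (v - p) \<le> norm (v - q)"
        using continuous_attains_inf[OF KAc KAne, of "\<lambda>q. norm (v - q)"] by blast
      have pv: "p \<noteq> v" using pKA vnot KA_def by auto
      have pK: "p \<in> K" using pKA AJ unfolding KA_def K_def by (meson hull_mono image_mono subsetD)
      have ineq: "\<And>i. i \<in> A \<Longrightarrow> inner (v - p) (c i - p) \<le> 0"
        using proj_char[of KA p v] pKA pmin unfolding KA_def by (simp add: hull_inc)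
      define x where "x t = v + t *\<^sub>R (p - v)" for t :: real
      have actdec: "h i (x t) < m" if iA: "i \<in> A" and t0: "0 < t" and t1: "t < 2" for i t
      proof -
        have e: "(norm (x t - c i))\<^sup>2 = (norm (v - c i))\<^sup>2 + 2 * t * inner (v - c i) (p - v) + t\<^sup>2 * (norm (p - v))\<^sup>2"
        proof -
          have eq: "x t - c i = (v - c i) + t *\<^sub>R (p - v)" by (simp add: x_def algebra_simps)
          have "(norm (x t - c i))\<^sup>2 = (norm ((v - c i) + t *\<^sub>R (p - v)))\<^sup>2" by (simp only: eq)
          also have "\<dots> = (norm (v - c i))\<^sup>2 + 2 * inner (v - c i) (t *\<^sub>R (p - v)) + (norm (t *\<^sub>R (p - v)))\<^sup>2"
            by (rule norm_add_sq)
          finally show ?thesis by (simp add: power_mult_distrib)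
        qed
        have "inner (v - c i) (p - v) = - (norm (v - p))\<^sup>2 + inner (v - p) (c i - p)"
          by (simp add: power2_norm_eq_inner inner_diff_left inner_diff_right inner_commute algebra_simps)
        then have "inner (v - c i) (p - v) \<le> - (norm (v - p))\<^sup>2" using ineq[OF iA] by simp
        then have "2 * t * inner (v - c i) (p - v) \<le> 2 * t * (- (norm (v - p))\<^sup>2)"
          using t0 by (intro mult_left_mono) auto
        moreover have "(norm (p - v))\<^sup>2 = (norm (v - p))\<^sup>2" by (simp add: norm_minus_commute)
        moreover have "(norm (v - p))\<^sup>2 > 0" using pv by simp
        moreover have "t\<^sup>2 < 2 * t" using t0 t1 by (simp add: power2_eq_square)
        moreover have "t\<^sup>2 * (norm (v - p))\<^sup>2 < (2 * t) * (norm (v - p))\<^sup>2"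
          using \<open>t\<^sup>2 < 2 * t\<close> \<open>(norm (v - p))\<^sup>2 > 0\<close> by (rule mult_strict_right_mono)
        ultimately have "(norm (x t - c i))\<^sup>2 < (norm (v - c i))\<^sup>2"
          unfolding e by (simp only: mult_minus_right)
        then show ?thesis using iA unfolding A_def h_def by auto
      qed
      have ev1: "\<forall>\<^sub>F t in at_right 0. \<forall>i\<in>J - A. h i (x t) < m"
      proof (rule eventually_ball_finite)
        show "finite (J - A)" using fin by simp
        show "\<forall>i\<in>J - A. \<forall>\<^sub>F t in at_right 0. h i (x t) < m"
        proof
          fix i assume i: "i \<in> J - A"
          then have "h i v < m" using hle[of i] by (auto simp: A_def)
          moreover have "((\<lambda>t. h i (x t)) \<longlongrightarrow> h i (x 0)) (at_right 0)"
            unfolding h_def x_def by (intro tendsto_intros)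
          moreover have "x 0 = v" by (simp add: x_def)
          ultimately show "\<forall>\<^sub>F t in at_right 0. h i (x t) < m"
            using order_tendstoD(2) by metis
        qed
      qed
      have ev2: "\<forall>\<^sub>F t in at_right (0::real). 0 < t \<and> t < 1"
        by (simp add: eventually_at_right_field) (auto intro: exI[of _ 1])
      obtain t where t: "\<forall>i\<in>J - A. h i (x t) < m" "0 < t" "t < 1"
        using eventually_happens[OF eventually_conj[OF ev1 ev2]] by auto
      have xK: "x t \<in> K"
      proof -
        have "(1 - t) *\<^sub>R v + t *\<^sub>R p \<in> K" using Kcv vK pK t by (simp add: convexD)
        moreover have "(1 - t) *\<^sub>R v + t *\<^sub>R p = x t" by (simp add: x_def algebra_simps)
        ultimately show ?thesis by simp
      qed
      have "\<forall>i\<in>J. h i (x t) < m"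
      proof
        fix i assume "i \<in> J"
        show "h i (x t) < m"
        proof (cases "i \<in> A")
          case True then show ?thesis using actdec t by simp
        next
          case False then show ?thesis using t \<open>i \<in> J\<close> by simp
        qed
      qed
      then have "g (x t) < m" unfolding g_def using fin ne by simp
      with vmin xK show False unfolding m_def by fastforce
    qed
    define Y where "Y = c ` A"
    have Yfin: "finite Y" using Afin by (simp add: Y_def)
    obtain u where u0: "\<forall>y\<in>Y. 0 \<le> u y" and u1: "sum u Y = 1" and uv: "(\<Sum>y\<in>Y. u y *\<^sub>R y) = v"
      using vA Yfin unfolding Y_def convex_hull_finite[OF Yfin[unfolded Y_def]] by blast
    define b where "b y = a (inv_into A c y)" for y
    have rep: "\<And>y. y \<in> Y \<Longrightarrow> inv_into A c y \<in> A \<and> c (inv_into A c y) = y"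
      unfolding Y_def by (auto simp: inv_into_into f_inv_into_f)
    have pwY: "\<forall>y\<in>Y. \<forall>z\<in>Y. norm (y - z) \<le> norm (b y - b z)"
    proof (intro ballI)
      fix y z assume "y \<in> Y" "z \<in> Y"
      then show "norm (y - z) \<le> norm (b y - b z)"
        using rep[of y] rep[of z] pw AJ unfolding b_def by (metis subsetD)
    qed
    have "(\<Sum>y\<in>Y. u y * ((norm ((\<Sum>z\<in>Y. u z *\<^sub>R z) - y))\<^sup>2 - (norm (b y))\<^sup>2)) \<le> 0"
      by (rule kirsz_alg[OF Yfin u0 u1 pwY])
    moreover have "(\<Sum>y\<in>Y. u y * ((norm ((\<Sum>z\<in>Y. u z *\<^sub>R z) - y))\<^sup>2 - (norm (b y))\<^sup>2)) = (\<Sum>y\<in>Y. u y * m)"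
    proof (rule sum.cong[OF refl])
      fix y assume y: "y \<in> Y"
      have "h (inv_into A c y) v = m" using rep[OF y] by (simp add: A_def)
      then show "u y * ((norm ((\<Sum>z\<in>Y. u z *\<^sub>R z) - y))\<^sup>2 - (norm (b y))\<^sup>2) = u y * m"
        using rep[OF y] unfolding uv b_def h_def by simp
    qed
    moreover have "(\<Sum>y\<in>Y. u y * m) = m" by (simp add: sum_distrib_right[symmetric] u1)
    ultimately show False using mpos by simp
  qed
  show ?thesis
  proof (intro exI ballI)
    fix i assume "i \<in> J"
    then have "(norm (v - c i))\<^sup>2 \<le> (norm (a i))\<^sup>2" using hle[of i] \<open>m \<le> 0\<close> unfolding h_def by linarith
    then show "norm (v - c i) \<le> norm (a i)" using power2_le_imp_le norm_ge_zero by blast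
  qed
qed



lemma sq_bound_aux:
  fixes D e d a b :: real
  assumes "0 \<le> d" "d \<le> D" "D - e < d" "0 \<le> a" "0 \<le> b" "a < D + e" "b < D + e"
    and "t \<le> 2 * a\<^sup>2 + 2 * b\<^sup>2 - 4 * d\<^sup>2"
  shows "t \<le> 16 * e * (D + e)"
proof -
  have "a\<^sup>2 \<le> (D + e)\<^sup>2" using assms by (intro power_mono) auto
  moreover have "b\<^sup>2 \<le> (D + e)\<^sup>2" using assms by (intro power_mono) auto
  moreover have "(D + e)\<^sup>2 - d\<^sup>2 = (D + e - d) * (D + e + d)" by (simp add: power2_eq_square algebra_simps)
  moreover have "(D + e - d) * (D + e + d) \<le> (2 * e) * (2 * (D + e))"
    using assms by (intro mult_mono) auto
  ultimately show ?thesis using assms(8) by linarith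
qed

lemma parallelogram_mid:
  fixes x y :: "'v::real_inner"
  shows "(norm (x - y))\<^sup>2 = 2 * (norm x)\<^sup>2 + 2 * (norm y)\<^sup>2 - 4 * (norm ((1/2) *\<^sub>R (x + y)))\<^sup>2"
  by (simp add: power2_norm_eq_inner inner_diff_left inner_diff_right inner_add_left inner_add_right inner_commute algebra_simps)

lemma balls_inter:
  fixes c :: "'i \<Rightarrow> 'v::{real_inner, complete_space}" and \<rho> :: "'i \<Rightarrow> real"
  assumes ne: "C \<noteq> {}"
    and fip: "\<And>J. finite J \<Longrightarrow> J \<subseteq> C \<Longrightarrow> \<exists>x. \<forall>w\<in>J. norm (x - c w) \<le> \<rho> w"
  shows "\<exists>x. \<forall>w\<in>C. norm (x - c w) \<le> \<rho> w"
proof -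
  define S where "S J = {x. \<forall>w\<in>J. norm (x - c w) \<le> \<rho> w}" for J
  define \<delta> where "\<delta> J = Inf (norm ` S J)" for J
  define FS where "FS = {J. finite J \<and> J \<subseteq> C}"
  obtain w0 where w0: "w0 \<in> C" using ne by blast
  define B where "B = norm (c w0) + \<rho> w0"
  have Sne: "\<And>J. J \<in> FS \<Longrightarrow> S J \<noteq> {}" using fip unfolding FS_def S_def by blast
  have bb: "\<And>J. bdd_below (norm ` S J)" by (rule bdd_belowI[of _ 0]) auto
  have dlow: "\<And>J x. x \<in> S J \<Longrightarrow> \<delta> J \<le> norm x" unfolding \<delta>_def using bb by (intro cInf_lower) auto
  have dnn: "\<And>J. J \<in> FS \<Longrightarrow> 0 \<le> \<delta> J" unfolding \<delta>_def using Sne by (intro cInf_greatest) auto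
  have Smono: "\<And>J J'. J \<subseteq> J' \<Longrightarrow> S J' \<subseteq> S J" unfolding S_def by auto
  have dmono: "\<And>J J'. J \<subseteq> J' \<Longrightarrow> J' \<in> FS \<Longrightarrow> \<delta> J \<le> \<delta> J'"
  proof -
    fix J J' :: "'i set" assume a: "J \<subseteq> J'" "J' \<in> FS"
    show "\<delta> J \<le> \<delta> J'" unfolding \<delta>_def
      using Sne[OF a(2)] bb Smono[OF a(1)] by (intro cInf_superset_mono) auto
  qed
  have dB: "\<And>J. J \<in> FS \<Longrightarrow> \<delta> J \<le> B"
  proof -
    fix J assume J: "J \<in> FS"
    then have J': "insert w0 J \<in> FS" using w0 by (auto simp: FS_def)
    obtain x where x: "x \<in> S (insert w0 J)" using Sne[OF J'] by blast
    have "norm x \<le> B"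
    proof -
      have "norm (x - c w0) \<le> \<rho> w0" using x by (auto simp: S_def)
      then show ?thesis unfolding B_def using norm_triangle_sub[of x "c w0"] by linarith
    qed
    moreover have "\<delta> J \<le> \<delta> (insert w0 J)" using dmono[OF _ J', of J] by blast
    ultimately show "\<delta> J \<le> B" using dlow[OF x] by linarith
  qed
  have dapprox: "\<And>J e. J \<in> FS \<Longrightarrow> e > 0 \<Longrightarrow> \<exists>x\<in>S J. norm x < \<delta> J + e"
  proof -
    fix J and e :: real assume J: "J \<in> FS" and e: "e > 0"
    have "Inf (norm ` S J) < \<delta> J + e" using e by (simp add: \<delta>_def)
    then obtain r where "r \<in> norm ` S J" "r < \<delta> J + e" using cInf_lessD[of "norm ` S J"] Sne[OF J] by blast
    then show "\<exists>x\<in>S J. norm x < \<delta> J + e" by auto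
  qed
  define D where "D = Sup (\<delta> ` FS)"
  have FSne: "{} \<in> FS" by (simp add: FS_def)
  have bA: "bdd_above (\<delta> ` FS)" using dB by (intro bdd_aboveI[of _ B]) auto
  have dD: "\<And>J. J \<in> FS \<Longrightarrow> \<delta> J \<le> D" unfolding D_def using bA by (intro cSup_upper) auto
  have D0: "0 \<le> D" using dD[OF FSne] dnn[OF FSne] by linarith
  have Dapprox: "\<And>e. e > 0 \<Longrightarrow> \<exists>J\<in>FS. D - e < \<delta> J"
  proof -
    fix e :: real assume "e > 0"
    then have "D - e < Sup (\<delta> ` FS)" by (simp add: D_def)
    then show "\<exists>J\<in>FS. D - e < \<delta> J" using less_cSupD[of "\<delta> ` FS"] FSne by blast
  qed
  have Smid: "\<And>J x y. x \<in> S J \<Longrightarrow> y \<in> S J \<Longrightarrow> (1/2) *\<^sub>R (x + y) \<in> S J"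
  proof -
    fix J x y assume x: "x \<in> S J" and y: "y \<in> S J"
    show "(1/2) *\<^sub>R (x + y) \<in> S J" unfolding S_def
    proof (intro CollectI ballI)
      fix w assume w: "w \<in> J"
      have "(1/2) *\<^sub>R (x + y) - c w = (1/2) *\<^sub>R (x - c w) + (1/2) *\<^sub>R (y - c w)" by (simp add: algebra_simps flip: scaleR_add_left)
      then have "norm ((1/2) *\<^sub>R (x + y) - c w) \<le> (1/2) * norm (x - c w) + (1/2) * norm (y - c w)"
        by (metis norm_triangle_ineq norm_scaleR abs_of_nonneg divide_nonneg_nonneg zero_le_one zero_le_numeral)
      moreover have "norm (x - c w) \<le> \<rho> w" "norm (y - c w) \<le> \<rho> w" using x y w by (auto simp: S_def)
      ultimately show "norm ((1/2) *\<^sub>R (x + y) - c w) \<le> \<rho> w" by linarith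
    qed
  qed
  have G: "\<And>J e x y. J \<in> FS \<Longrightarrow> D - e < \<delta> J \<Longrightarrow> x \<in> S J \<Longrightarrow> y \<in> S J \<Longrightarrow> norm x < D + e \<Longrightarrow> norm y < D + e
      \<Longrightarrow> (norm (x - y))\<^sup>2 \<le> 16 * e * (D + e)"
  proof -
    fix J e x y assume J: "J \<in> FS" and dJ: "D - e < \<delta> J" and x: "x \<in> S J" and y: "y \<in> S J"
      and nx: "norm x < D + e" and ny: "norm y < D + e"
    have m: "\<delta> J \<le> norm ((1/2) *\<^sub>R (x + y))" using dlow Smid x y by blast
    then have "(\<delta> J)\<^sup>2 \<le> (norm ((1/2) *\<^sub>R (x + y)))\<^sup>2" using dnn[OF J] by (intro power_mono) auto
    then have "(norm (x - y))\<^sup>2 \<le> 2 * (norm x)\<^sup>2 + 2 * (norm y)\<^sup>2 - 4 * (\<delta> J)\<^sup>2"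
      unfolding parallelogram_mid[of x y] by linarith
    then show "(norm (x - y))\<^sup>2 \<le> 16 * e * (D + e)"
      using sq_bound_aux[of "\<delta> J" D e "norm x" "norm y"] dnn[OF J] dD[OF J] dJ nx ny by auto
  qed
  define e where "e n = 1 / (real n + 1)" for n :: nat
  have epos: "\<And>n. e n > 0" by (simp add: e_def)
  have emono: "\<And>n m. n \<le> m \<Longrightarrow> e m \<le> e n" by (simp add: e_def frac_le)
  have esmall: "\<And>r. r > 0 \<Longrightarrow> \<exists>N. \<forall>n\<ge>N. e n < r"
  proof -
    fix r :: real assume r: "r > 0"
    obtain N :: nat where N: "1 / r < real N" using reals_Archimedean2 by blast
    show "\<exists>N. \<forall>n\<ge>N. e n < r"
    proof (intro exI allI impI)
      fix n assume "N \<le> n"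
      then have "1 / r < real n + 1" using N by linarith
      then show "e n < r" using r unfolding e_def by (simp add: divide_less_eq mult.commute)
    qed
  qed
  have "\<forall>n. \<exists>J. J \<in> FS \<and> D - e n < \<delta> J" using Dapprox epos by blast
  then obtain Jn where Jn: "\<And>n. Jn n \<in> FS \<and> D - e n < \<delta> (Jn n)" by metis
  define K where "K n = \<Union> (Jn ` {..n})" for n
  have KFS: "\<And>n. K n \<in> FS" using Jn unfolding K_def FS_def by auto
  have Kmono: "\<And>n m. n \<le> m \<Longrightarrow> K n \<subseteq> K m" unfolding K_def by (auto intro: le_trans)
  have Kd: "\<And>n. D - e n < \<delta> (K n)"
  proof -
    fix n
    have "Jn n \<subseteq> K n" unfolding K_def by auto
    then show "D - e n < \<delta> (K n)" using Jn[of n] dmono KFS by (meson less_le_trans)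
  qed
  have "\<forall>n. \<exists>x\<in>S (K n). norm x < \<delta> (K n) + e n" using dapprox KFS epos by blast
  then obtain x where x: "\<And>n. x n \<in> S (K n)" and nx: "\<And>n. norm (x n) < \<delta> (K n) + e n" by metis
  have nx': "\<And>n m. n \<le> m \<Longrightarrow> norm (x m) < D + e n"
  proof -
    fix n m :: nat assume "n \<le> m"
    then show "norm (x m) < D + e n" using nx[of m] dD[OF KFS[of m]] emono[of n m] by linarith
  qed
  have xS: "\<And>n m. n \<le> m \<Longrightarrow> x m \<in> S (K n)" using x Smono Kmono by blast
  have small: "\<And>r. r > 0 \<Longrightarrow> \<exists>N. \<forall>n\<ge>N. 16 * e n * (D + e n) < r"
  proof -
    fix r :: real assume r: "r > 0"
    obtain N where N: "\<forall>n\<ge>N. e n < min 1 (r / (16 * (D + 1)))"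
      using esmall[of "min 1 (r / (16 * (D + 1)))"] r D0 by auto
    show "\<exists>N. \<forall>n\<ge>N. 16 * e n * (D + e n) < r"
    proof (intro exI allI impI)
      fix n assume "N \<le> n"
      then have en: "e n < 1" "e n < r / (16 * (D + 1))" using N by auto
      have "16 * e n * (D + e n) \<le> 16 * e n * (D + 1)" using en epos[of n] by (intro mult_left_mono) auto
      also have "\<dots> < 16 * (r / (16 * (D + 1))) * (D + 1)" using en D0 by (intro mult_strict_right_mono) auto
      also have "\<dots> = r" using D0 by (simp add: field_simps)
      finally show "16 * e n * (D + e n) < r" .
    qed
  qed
  have "Cauchy x"
  proof (rule CauchyI)
    fix r :: real assume r: "r > 0"
    obtain N where N: "\<forall>n\<ge>N. 16 * e n * (D + e n) < r\<^sup>2" using small[of "r\<^sup>2"] r by auto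
    show "\<exists>M. \<forall>m\<ge>M. \<forall>n\<ge>M. norm (x m - x n) < r"
    proof (intro exI allI impI)
      fix m n assume m: "N \<le> m" and n: "N \<le> n"
      have "(norm (x m - x n))\<^sup>2 \<le> 16 * e N * (D + e N)"
        using G[OF KFS Kd xS[OF m] xS[OF n] nx'[OF m] nx'[OF n]] .
      also have "\<dots> < r\<^sup>2" using N by auto
      finally show "norm (x m - x n) < r" using r by (simp add: power_less_imp_less_base)
    qed
  qed
  then obtain xl where xl: "x \<longlonglongrightarrow> xl" using Cauchy_convergent_iff convergent_def by blast
  show ?thesis
  proof (intro exI ballI)
    fix w assume w: "w \<in> C"
    define K' where "K' n = insert w (K n)" for n
    have K'FS: "\<And>n. K' n \<in> FS" using KFS w unfolding K'_def FS_def by auto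
    have "\<forall>n. \<exists>y\<in>S (K' n). norm y < \<delta> (K' n) + e n" using dapprox K'FS epos by blast
    then obtain y where y: "\<And>n. y n \<in> S (K' n)" and ny: "\<And>n. norm (y n) < \<delta> (K' n) + e n" by metis
    have yK: "\<And>n. y n \<in> S (K n)" using y Smono unfolding K'_def by blast
    have yw: "\<And>n. norm (y n - c w) \<le> \<rho> w" using y unfolding K'_def S_def by auto
    have ny': "\<And>n. norm (y n) < D + e n"
    proof -
      fix n show "norm (y n) < D + e n" using ny[of n] dD[OF K'FS[of n]] by linarith
    qed
    show "norm (xl - c w) \<le> \<rho> w"
    proof (rule field_le_epsilon)
      fix r :: real assume r: "r > 0"
      obtain N1 where N1: "\<forall>n\<ge>N1. 16 * e n * (D + e n) < (r/2)\<^sup>2" using small[of "(r/2)\<^sup>2"] r by auto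
      obtain N2 where N2: "\<forall>n\<ge>N2. dist (x n) xl < r/2" using xl r unfolding lim_sequentially by (meson half_gt_zero)
      define n where "n = max N1 N2"
      have "(norm (x n - y n))\<^sup>2 \<le> 16 * e n * (D + e n)"
        using G[OF KFS Kd x yK nx'[OF order_refl] ny'] .
      also have "\<dots> < (r/2)\<^sup>2" using N1 by (simp add: n_def)
      finally have a: "norm (x n - y n) < r/2" using r power_less_imp_less_base[of "norm (x n - y n)" 2 "r/2"] by simp
      have b: "norm (xl - x n) < r/2" using N2 by (simp add: n_def dist_norm norm_minus_commute)
      have eq: "xl - c w = (xl - x n) + ((x n - y n) + (y n - c w))" by simp
      have "norm (xl - c w) \<le> norm (xl - x n) + norm ((x n - y n) + (y n - c w))"
        unfolding eq by (rule norm_triangle_ineq)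
      moreover have "norm ((x n - y n) + (y n - c w)) \<le> norm (x n - y n) + norm (y n - c w)"
        by (rule norm_triangle_ineq)
      ultimately have "norm (xl - c w) \<le> norm (xl - x n) + norm (x n - y n) + norm (y n - c w)" by linarith
      then show "norm (xl - c w) \<le> \<rho> w + r" using a b yw[of n] by linarith
    qed
  qed
qed



lemma exist_zero:
  fixes F :: "'v::{real_inner, complete_space} \<Rightarrow> 'v"
  assumes r: "r > 0" and tau: "\<tau> > 0"
    and sm: "\<forall>v1\<in>ball v0 r. \<forall>v2\<in>ball v0 r. inner (F v1 - F v2) (v1 - v2) \<ge> \<tau> * (norm (v1 - v2))\<^sup>2"
    and cF: "continuous_on (ball v0 r) F"
    and small: "norm (F v0) < \<tau> * r"
  shows "\<exists>v. F v = 0 \<and> norm (v - v0) \<le> norm (F v0) / \<tau>"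
proof -
  define C where "C = ball v0 r"
  define a where "a w = (1 / (2 * \<tau>)) *\<^sub>R F w" for w
  define c where "c w = w - a w" for w
  have pw: "norm (c i - c j) \<le> norm (a i - a j)" if i: "i \<in> C" and j: "j \<in> C" for i j
  proof -
    have mono: "\<tau> * (norm (i - j))\<^sup>2 \<le> inner (F i - F j) (i - j)" using sm i j by (auto simp: C_def)
    have "inner (i - j) (a i - a j) = (1 / (2 * \<tau>)) * inner (F i - F j) (i - j)"
      by (simp add: a_def inner_commute flip: scaleR_diff_right)
    then have "\<tau> * (norm (i - j))\<^sup>2 \<le> \<tau> * (2 * inner (i - j) (a i - a j))"
      using mono tau by simp
    then have ip: "2 * inner (i - j) (a i - a j) \<ge> (norm (i - j))\<^sup>2"
      using tau by (simp only: mult_le_cancel_left_pos)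
    have "c i - c j = (i - j) - (a i - a j)" by (simp add: c_def algebra_simps)
    then have "(norm (c i - c j))\<^sup>2 = (norm (i - j))\<^sup>2 - 2 * inner (i - j) (a i - a j) + (norm (a i - a j))\<^sup>2"
      by (simp add: norm_diff_sq)
    then have "(norm (c i - c j))\<^sup>2 \<le> (norm (a i - a j))\<^sup>2" using ip by linarith
    then show ?thesis using power2_le_imp_le norm_ge_zero by blast
  qed
  have "\<exists>x. \<forall>w\<in>C. norm (x - c w) \<le> norm (a w)"
  proof (rule balls_inter)
    show "C \<noteq> {}" using r by (simp add: C_def)
  next
    fix J assume J: "finite J" "J \<subseteq> C"
    show "\<exists>x. \<forall>w\<in>J. norm (x - c w) \<le> norm (a w)"
    proof (cases "J = {}")
      case True then show ?thesis by simp
    next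
      case False
      show ?thesis using kirsz_finite[OF J(1) False, of c a] pw J(2) by blast
    qed
  qed
  then obtain v where v: "\<forall>w\<in>C. norm (v - c w) \<le> norm (a w)" by blast
  have M: "\<tau> * (norm (w - v))\<^sup>2 \<le> inner (F w) (w - v)" if w: "w \<in> C" for w
  proof -
    have eq: "v - c w = (v - w) + a w" by (simp add: c_def)
    have "(norm (v - c w))\<^sup>2 = (norm (v - w))\<^sup>2 + 2 * inner (v - w) (a w) + (norm (a w))\<^sup>2"
      unfolding eq by (rule norm_add_sq)
    moreover have "(norm (v - c w))\<^sup>2 \<le> (norm (a w))\<^sup>2" using v w by (simp add: power_mono)
    ultimately have "(norm (v - w))\<^sup>2 + 2 * inner (v - w) (a w) \<le> 0" by linarith
    moreover have "2 * inner (v - w) (a w) = (1 / \<tau>) * inner (v - w) (F w)" by (simp add: a_def)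
    ultimately have "\<tau> * (norm (v - w))\<^sup>2 + inner (v - w) (F w) \<le> 0"
      using tau by (simp add: field_simps)
    moreover have "inner (v - w) (F w) = - inner (F w) (w - v)"
      by (simp add: inner_commute inner_diff_left inner_diff_right)
    moreover have "\<tau> * (norm (v - w))\<^sup>2 = \<tau> * (norm (w - v))\<^sup>2" by (simp add: norm_minus_commute)
    ultimately show ?thesis by linarith
  qed
  have v0C: "v0 \<in> C" using r by (simp add: C_def)
  have dist_bd: "norm (v - v0) \<le> norm (F v0) / \<tau>"
  proof (cases "v = v0")
    case True then show ?thesis using tau by simp
  next
    case False
    have "\<tau> * (norm (v0 - v))\<^sup>2 \<le> inner (F v0) (v0 - v)" by (rule M[OF v0C])
    also have "\<dots> \<le> norm (F v0) * norm (v0 - v)" by (rule norm_cauchy_schwarz)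
    finally have "\<tau> * norm (v0 - v) * norm (v0 - v) \<le> norm (F v0) * norm (v0 - v)"
      by (simp add: power2_eq_square mult.assoc)
    then have "\<tau> * norm (v0 - v) \<le> norm (F v0)" using False by simp
    then show ?thesis using tau by (simp add: field_simps norm_minus_commute)
  qed
  have vC: "v \<in> C"
  proof -
    have "norm (F v0) / \<tau> < r" using small tau by (simp add: field_simps)
    then show ?thesis using dist_bd by (simp add: C_def dist_norm norm_minus_commute)
  qed
  define d where "d = F v"
  have ev: "\<forall>\<^sub>F s in at_right (0::real). inner (F (v - s *\<^sub>R d)) d \<le> 0"
  proof -
    have "open C" by (simp add: C_def)
    then obtain e where e: "e > 0" "ball v e \<subseteq> C" using vC openE by blast
    have "\<forall>\<^sub>F s in at_right (0::real). 0 < s \<and> s < e / (norm d + 1)"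
    proof -
      have "norm d + 1 > 0" using norm_ge_zero[of d] by linarith
      then have "0 < e / (norm d + 1)" using e(1) by (rule divide_pos_pos[rotated])
      then show ?thesis unfolding eventually_at_right_field by (intro exI[of _ "e / (norm d + 1)"]) auto
    qed
    then show ?thesis
    proof (rule eventually_mono)
      fix s :: real assume s: "0 < s \<and> s < e / (norm d + 1)"
      have "norm (s *\<^sub>R d) < e"
      proof -
        have "norm (s *\<^sub>R d) = s * norm d" using s by simp
        also have "\<dots> \<le> s * (norm d + 1)" using s by simp
        also have "\<dots> < e"
        proof -
          have nd: "norm d + 1 > 0" using norm_ge_zero[of d] by linarith
          show ?thesis using s pos_less_divide_eq[OF nd, of s e] by blast
        qed
        finally show ?thesis .
      qed
      then have "v - s *\<^sub>R d \<in> C" using e by (auto simp: dist_norm)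
      from M[OF this] have "\<tau> * (norm (s *\<^sub>R d))\<^sup>2 \<le> inner (F (v - s *\<^sub>R d)) (- (s *\<^sub>R d))" by simp
      moreover have "0 \<le> \<tau> * (norm (s *\<^sub>R d))\<^sup>2" using tau by simp
      ultimately have "0 \<le> - s * inner (F (v - s *\<^sub>R d)) d" by simp
      then show "inner (F (v - s *\<^sub>R d)) d \<le> 0" using s by (simp add: mult_le_0_iff)
    qed
  qed
  have "isCont F v" using cF vC by (simp add: C_def continuous_on_eq_continuous_at)
  moreover have "((\<lambda>s::real. v - s *\<^sub>R d) \<longlongrightarrow> v) (at_right 0)"
  proof -
    have "((\<lambda>s::real. v - s *\<^sub>R d) \<longlongrightarrow> v - 0 *\<^sub>R d) (at_right 0)" by (intro tendsto_intros)
    then show ?thesis by simp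
  qed
  ultimately have "((\<lambda>s. F (v - s *\<^sub>R d)) \<longlongrightarrow> F v) (at_right 0)" by (rule isCont_tendsto_compose)
  then have "((\<lambda>s. inner (F (v - s *\<^sub>R d)) d) \<longlongrightarrow> inner (F v) d) (at_right (0::real))"
    by (intro tendsto_intros)
  then have "inner (F v) d \<le> 0" using ev by (rule tendsto_upperbound) simp
  then have "F v = 0" unfolding d_def by (meson inner_ge_zero inner_eq_zero_iff order_antisym)
  then show ?thesis using dist_bd by blast
qed



theorem theorem8:
  fixes \<psi> :: "'u::banach \<Rightarrow> 'v::{real_inner, complete_space} \<Rightarrow> 'v"
    and ub :: 'u and vb :: 'v and BU :: "'u set" and BV :: "'v set" and \<tau> :: real
  assumes zero: "\<psi> ub vb = 0"
    and nbhU: "ub \<in> interior BU" and nbhV: "vb \<in> interior BV"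
    and cont: "continuous_on (BU \<times> BV) (\<lambda>(u, v). \<psi> u v)"
    and tau_pos: "\<tau> > 0"
    and strong_mono: "\<forall>u\<in>BU. \<forall>v1\<in>BV. \<forall>v2\<in>BV.
        inner (\<psi> u v1 - \<psi> u v2) (v1 - v2) \<ge> \<tau> * (norm (v1 - v2))\<^sup>2"
    and lip: "\<exists>L. \<forall>v\<in>BV. (lipschitz_on L UNIV (\<lambda>u. \<psi> u v))"
  shows "has_sv_localization (\<lambda>u. {v. \<psi> u v = 0}) ub vb
       \<and> has_lipschitz_sv_localization (\<lambda>u. {v. \<psi> u v = 0}) ub vb"
proof -
  define S where "S u = {v. \<psi> u v = 0}" for u
  obtain r0 where r0: "r0 > 0" "ball vb r0 \<subseteq> BV" using nbhV mem_interior by blast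
  obtain L where L: "\<forall>v\<in>BV. lipschitz_on L UNIV (\<lambda>u. \<psi> u v)" using lip by blast
  have vbBV: "vb \<in> BV" using nbhV interior_subset by blast
  have L0: "0 \<le> L" using L vbBV lipschitz_on_nonneg by blast
  have Lip: "norm (\<psi> u1 v - \<psi> u2 v) \<le> L * norm (u1 - u2)" if "v \<in> BV" for u1 u2 v
    using L that lipschitz_on_normD by blast
  define R where "R = r0 / 2"
  have R0: "R > 0" using r0 by (simp add: R_def)
  define \<rho> where "\<rho> = \<tau> * R / (2 * (L + 1))"
  have \<rho>0: "\<rho> > 0" using tau_pos R0 L0 by (simp add: \<rho>_def)
  have L\<rho>: "L * \<rho> < \<tau> * R / 2"
  proof -
    have "L * \<rho> = (L / (L + 1)) * (\<tau> * R / 2)" using L0 by (simp add: \<rho>_def field_simps)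
    also have "\<dots> < 1 * (\<tau> * R / 2)"
      using L0 tau_pos R0 by (intro mult_strict_right_mono) (auto simp: field_simps)
    finally show ?thesis by simp
  qed
  define W where "W = ball ub \<rho> \<inter> interior BU"
  define Ov where "Ov = ball vb R"
  have WBU: "W \<subseteq> BU" using interior_subset by (auto simp: W_def)
  have OvBV: "Ov \<subseteq> BV" using r0 by (auto simp: Ov_def R_def)
  have ubW: "ub \<in> interior W" using nbhU \<rho>0 by (simp add: W_def interior_open open_Int)
  have vbOv: "vb \<in> interior Ov" using R0 by (simp add: Ov_def interior_open)
  have ex: "\<exists>v. v \<in> S u \<inter> Ov" if u: "u \<in> W" for u
  proof -
    have uBU: "u \<in> BU" using u WBU by blast
    have sm: "\<forall>v1\<in>ball vb r0. \<forall>v2\<in>ball vb r0. inner (\<psi> u v1 - \<psi> u v2) (v1 - v2) \<ge> \<tau> * (norm (v1 - v2))\<^sup>2"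
      using strong_mono uBU r0 by blast
    have cF: "continuous_on (ball vb r0) (\<psi> u)"
    proof -
      have "continuous_on (ball vb r0) (\<lambda>v. (u, v))" by (intro continuous_intros)
      moreover have "(\<lambda>v. (u, v)) ` ball vb r0 \<subseteq> BU \<times> BV" using uBU r0 by auto
      ultimately have "continuous_on (ball vb r0) ((\<lambda>(u, v). \<psi> u v) \<circ> (\<lambda>v. (u, v)))"
        using cont by (intro continuous_on_compose) (auto elim: continuous_on_subset)
      then show ?thesis by (simp add: o_def)
    qed
    have Fvb: "norm (\<psi> u vb) < \<tau> * R / 2"
    proof -
      have "norm (\<psi> u vb) = norm (\<psi> u vb - \<psi> ub vb)" using zero by simp
      also have "\<dots> \<le> L * norm (u - ub)" using Lip vbBV by blast
      also have "\<dots> \<le> L * \<rho>"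
        using u L0 by (intro mult_left_mono) (auto simp: W_def dist_norm norm_minus_commute)
      finally show ?thesis using L\<rho> by linarith
    qed
    have "\<tau> * R / 2 < \<tau> * r0" using tau_pos r0 by (simp add: R_def)
    then have "norm (\<psi> u vb) < \<tau> * r0" using Fvb by linarith
    then obtain v where v: "\<psi> u v = 0" "norm (v - vb) \<le> norm (\<psi> u vb) / \<tau>"
      using exist_zero[OF r0(1) tau_pos sm cF] by blast
    have "norm (\<psi> u vb) / \<tau> < R / 2" using Fvb tau_pos by (simp add: field_simps)
    then have "norm (v - vb) < R" using v(2) R0 by linarith
    then have "v \<in> Ov" by (simp add: Ov_def dist_norm norm_minus_commute)
    then show ?thesis using v by (auto simp: S_def)
  qed
  have uniq: "v1 = v2" if "u \<in> W" "v1 \<in> S u \<inter> Ov" "v2 \<in> S u \<inter> Ov" for u v1 v2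
  proof -
    have "\<tau> * (norm (v1 - v2))\<^sup>2 \<le> inner (\<psi> u v1 - \<psi> u v2) (v1 - v2)"
      using strong_mono that WBU OvBV by blast
    also have "\<dots> = 0" using that by (simp add: S_def)
    finally show ?thesis using tau_pos by (simp add: mult_le_0_iff)
  qed
  have loc: "sv_localization_on S ub vb W Ov"
    unfolding sv_localization_on_def
  proof (intro conjI ballI)
    show "vb \<in> S ub" using zero by (simp add: S_def)
    show "ub \<in> interior W" by (rule ubW)
    show "vb \<in> interior Ov" by (rule vbOv)
    fix u assume "u \<in> W"
    then show "\<exists>!v. v \<in> S u \<inter> Ov" using ex uniq by blast
  qed
  define sol where "sol u = (THE v. v \<in> S u \<inter> Ov)" for u
  have sol: "sol u \<in> S u \<inter> Ov" if "u \<in> W" for u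
  proof -
    have "\<exists>!v. v \<in> S u \<inter> Ov" using ex[OF that] uniq[OF that] by blast
    then show ?thesis unfolding sol_def by (rule theI')
  qed
  have lipsol: "lipschitz_on (L / \<tau>) W sol"
  proof (rule lipschitz_onI)
    show "0 \<le> L / \<tau>" using L0 tau_pos by simp
    fix u1 u2 assume u1: "u1 \<in> W" and u2: "u2 \<in> W"
    define v1 where "v1 = sol u1"
    define v2 where "v2 = sol u2"
    have s1: "\<psi> u1 v1 = 0" "v1 \<in> BV" using sol[OF u1] OvBV by (auto simp: v1_def S_def)
    have s2: "\<psi> u2 v2 = 0" "v2 \<in> BV" using sol[OF u2] OvBV by (auto simp: v2_def S_def)
    have "\<tau> * (norm (v1 - v2))\<^sup>2 \<le> inner (\<psi> u1 v1 - \<psi> u1 v2) (v1 - v2)"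
      using strong_mono u1 WBU s1 s2 by blast
    also have "\<dots> = inner (\<psi> u2 v2 - \<psi> u1 v2) (v1 - v2)" using s1 s2 by simp
    also have "\<dots> \<le> norm (\<psi> u2 v2 - \<psi> u1 v2) * norm (v1 - v2)" by (rule norm_cauchy_schwarz)
    also have "\<dots> \<le> (L * norm (u1 - u2)) * norm (v1 - v2)"
    proof (intro mult_right_mono)
      show "norm (\<psi> u2 v2 - \<psi> u1 v2) \<le> L * norm (u1 - u2)"
        using Lip[OF s2(2), of u2 u1] by (simp add: norm_minus_commute)
    qed simp
    finally have "\<tau> * norm (v1 - v2) * norm (v1 - v2) \<le> (L * norm (u1 - u2)) * norm (v1 - v2)"
      by (simp add: power2_eq_square mult.assoc)
    then have "\<tau> * norm (v1 - v2) \<le> L * norm (u1 - u2)"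
      by (cases "v1 = v2") (use L0 in auto)
    then have "norm (v1 - v2) \<le> L / \<tau> * norm (u1 - u2)" using tau_pos by (simp add: field_simps)
    then show "dist (sol u1) (sol u2) \<le> L / \<tau> * dist u1 u2" by (simp add: v1_def v2_def dist_norm)
  qed
  show ?thesis
    unfolding has_sv_localization_def has_lipschitz_sv_localization_def S_def[symmetric]
    using loc lipsol unfolding sol_def by blast
qed


end
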